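(* Let $q$ be a power of an odd prime $p$ with $q>5$, let $3\le h\le k$ be integers, let $$D_2=\Bigl\{(x_1,\ldots,x_k)\in\mathbb{F}_q^k\setminus\{0\}:\prod_{1\le i<j\le h}(x_i+x_j)=0\Bigr\},$$ and let $n=\#D_2$. Then the minimum nonzero weight of $\mathrm{C}_{D_2}$ is $n-q^{k-1}+1$, and it is attained exactly by the codewords associated with the hyperplanes $x_i+x_j=0$, $1\le i<j\le h$ (i.e. by the codewords $c_f$ with $f=\lambda(x_i+x_j)$, $\lambda\in\mathbb{F}_q^*$).
   Context: For a finite ordered set $D=\{P_1,\ldots,P_n\}\subseteq\mathbb{F}_q^k$, $\mathrm{C}_D=\{c_f=(f(P_1),\ldots,f(P_n)):f:\mathbb{F}_q^k\to\mathbb{F}_q\text{ linear}\}$; the codeword associated with a hyperplane through the origin is $c_f$ for a linear form $f$ defining it. Weights are Hamming weights. *)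

theory Defs
  imports "HOL-Library.FuncSet" "HOL-Computational_Algebra.Primes"
begin

text \<open>Vectors of F_q^k are modelled as functions nat => F with support in {..<k};
 coordinates x_1..x_k of the paper are indices 0..k-1.\<close>

definition kvecs :: "nat \<Rightarrow> (nat \<Rightarrow> 'a::zero) set" where
  "kvecs k = {x. \<forall>i\<ge>k. x i = 0}"

text \<open>Linear forms f : F_q^k -> F_q are exactly x |-> sum_{i<k} a_i x_i with a in F_q^k.\<close>

definition linform :: "nat \<Rightarrow> (nat \<Rightarrow> 'a::comm_ring_1) \<Rightarrow> (nat \<Rightarrow> 'a) \<Rightarrow> 'a" where
  "linform k a x = (\<Sum>i<k. a i * x i)"

text \<open>The codeword c_f, as a function on the (finite) defining set D.\<close>

definition codeword :: "nat \<Rightarrow> (nat \<Rightarrow> 'a) set \<Rightarrow> (nat \<Rightarrow> 'a::comm_ring_1) \<Rightarrow> ((nat \<Rightarrow> 'a) \<Rightarrow> 'a)" where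
  "codeword k D a = restrict (linform k a) D"

definition code :: "nat \<Rightarrow> (nat \<Rightarrow> 'a::comm_ring_1) set \<Rightarrow> ((nat \<Rightarrow> 'a) \<Rightarrow> 'a) set" where
  "code k D = {codeword k D a | a. a \<in> kvecs k}"

definition hwt :: "(nat \<Rightarrow> 'a) set \<Rightarrow> ((nat \<Rightarrow> 'a) \<Rightarrow> 'a::zero) \<Rightarrow> nat" where
  "hwt D c = card {P\<in>D. c P \<noteq> 0}"

definition zero_word :: "(nat \<Rightarrow> 'a) set \<Rightarrow> ((nat \<Rightarrow> 'a) \<Rightarrow> 'a::zero)" where
  "zero_word D = restrict (\<lambda>P. 0) D"

end

theory Submission
  imports Defs "HOL-Number_Theory.Residues"
begin

lemma two_ne0:
  fixes p m :: nat
  assumes "odd p" "card (UNIV :: 'a::{field,finite} set) = p ^ m"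
  shows "(1::'a) + 1 \<noteq> 0"
proof
  assume h: "(1::'a) + 1 = 0"
  have "of_nat 2 = (0::'a)" using h by simp
  hence "CHAR('a) dvd 2" by (simp only: of_nat_eq_0_iff_char_dvd)
  moreover have "CHAR('a) dvd p ^ m" using CHAR_dvd_CARD[where 'a='a] assms(2) by simp
  moreover have "coprime 2 (p^m)" using assms(1) by simp
  ultimately have "is_unit (CHAR('a))" using coprime_common_divisor by blast
  hence "CHAR('a) = 1" by simp
  thus False by simp
qed

lemma avoid4:
  assumes "card (UNIV :: 'a::finite set) > 5"
  shows "\<exists>y::'a. y \<noteq> a1 \<and> y \<noteq> a2 \<and> y \<noteq> a3 \<and> y \<noteq> a4"
proof -
  have "card {a1,a2,a3,a4} \<le> 4" using card_length[of "[a1,a2,a3,a4]"] by simp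
  hence "{a1,a2,a3,a4} \<noteq> (UNIV::'a set)" using assms by auto
  thus ?thesis by auto
qed

lemma card_W:
  assumes "finite I"
  shows "card {x::nat\<Rightarrow>'a::{zero,finite}. \<forall>i. i \<notin> I \<longrightarrow> x i = 0} = card (UNIV::'a set) ^ card I"
    and "finite {x::nat\<Rightarrow>'a::{zero,finite}. \<forall>i. i \<notin> I \<longrightarrow> x i = 0}"
proof -
  let ?W = "{x::nat\<Rightarrow>'a. \<forall>i. i \<notin> I \<longrightarrow> x i = 0}"
  have b: "bij_betw (\<lambda>x. restrict x I) ?W (PiE I (\<lambda>_. UNIV))"
  proof (rule bij_betw_byWitness[where f'="\<lambda>g i. if i \<in> I then g i else 0"])
    show "\<forall>a\<in>?W. (\<lambda>i. if i \<in> I then restrict a I i else 0) = a" by auto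
    show "\<forall>a'\<in>PiE I (\<lambda>_. UNIV). restrict (\<lambda>i. if i \<in> I then a' i else 0) I = a'"
      by (auto simp: PiE_def extensional_def restrict_def)
    show "(\<lambda>x. restrict x I) ` ?W \<subseteq> PiE I (\<lambda>_. UNIV)" by auto
    show "(\<lambda>g i. if i \<in> I then g i else 0) ` PiE I (\<lambda>_. UNIV) \<subseteq> ?W" by auto
  qed
  have "card ?W = card (PiE I (\<lambda>_. UNIV::'a set))" using bij_betw_same_card[OF b] .
  also have "\<dots> = card (UNIV::'a set) ^ card I" using assms by (simp add: card_PiE)
  finally show "card ?W = card (UNIV::'a set) ^ card I" .
  have "finite (PiE I (\<lambda>_. UNIV::'a set))" using assms by (simp add: finite_PiE)
  thus "finite ?W" using bij_betw_finite[OF b] by simp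
qed

lemma kvecs_W: "kvecs k = {x. \<forall>i. i \<notin> {..<k} \<longrightarrow> x i = 0}"
  by (auto simp: kvecs_def)

lemma finite_kvecs: "finite (kvecs k :: (nat \<Rightarrow> 'a::{zero,finite}) set)"
  unfolding kvecs_W by (rule card_W(2)) simp

lemma linform_upd:
  "linform k a (y(t:=z)) = linform k a y + (if t < k then a t * (z - y t) else 0)"
proof -
  have "linform k a (y(t:=z)) = (\<Sum>i<k. a i * y i + (if i = t then a t * (z - y t) else 0))"
    unfolding linform_def by (rule sum.cong) (auto simp: algebra_simps)
  also have "\<dots> = linform k a y + (if t < k then a t * (z - y t) else 0)"
    unfolding linform_def sum.distrib by (simp add: sum.delta)
  finally show ?thesis .
qed

lemma ker_card:
  fixes a :: "nat \<Rightarrow> 'a::{field,finite}"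
  assumes "a t \<noteq> 0" "t < k"
  shows "card {x\<in>kvecs k. linform k a x = 0} = card (UNIV::'a set) ^ (k - 1)"
proof -
  let ?K = "{x\<in>kvecs k. linform k a x = 0}"
  let ?W = "{x::nat\<Rightarrow>'a. \<forall>i. i \<notin> {..<k}-{t} \<longrightarrow> x i = 0}"
  have b: "bij_betw (\<lambda>x. x(t:=0)) ?K ?W"
  proof (rule bij_betw_byWitness[where f'="\<lambda>y. y(t := - linform k a y / a t)"])
    show "\<forall>x\<in>?K. (x(t:=0))(t := - linform k a (x(t:=0)) / a t) = x"
    proof
      fix x assume x: "x \<in> ?K"
      have "linform k a (x(t:=0)) = - a t * x t" using x assms by (simp add: linform_upd)
      thus "(x(t:=0))(t := - linform k a (x(t:=0)) / a t) = x" using assms by auto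
    qed
    show "\<forall>y\<in>?W. (y(t := - linform k a y / a t))(t:=0) = y" by auto
    show "(\<lambda>x. x(t:=0)) ` ?K \<subseteq> ?W" by (auto simp: kvecs_def)
    show "(\<lambda>y. y(t := - linform k a y / a t)) ` ?W \<subseteq> ?K"
      using assms by (auto simp: kvecs_def linform_upd)
  qed
  have "card ?K = card ?W" using bij_betw_same_card[OF b] .
  also have "\<dots> = card (UNIV::'a set) ^ (k - 1)" by (subst card_W(1)) (use assms in auto)
  finally show ?thesis .
qed

lemma construct3:
  fixes a :: "nat \<Rightarrow> 'a::field"
  assumes two: "(1::'a) + 1 \<noteq> 0" and "u < h" "v < h" "w < h" "u \<noteq> v" "u \<noteq> w" "v \<noteq> w" "h \<le> k"
    and "s + 1 \<noteq> 0" "r + 1 \<noteq> 0" "c + 1 \<noteq> 0" "s + r \<noteq> 0" "s + c \<noteq> 0" "r + c \<noteq> 0"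
  defines "x \<equiv> \<lambda>t. if t=u then s else if t=v then r else if t=w then c else if t<h then 1 else 0"
  shows "x \<in> kvecs k" "\<forall>i j. i<j \<and> j<h \<longrightarrow> x i + x j \<noteq> 0"
    "linform k a x = (\<Sum>t<h. a t) + a u*(s-1) + a v*(r-1) + a w*(c-1)"
proof -
  show "x \<in> kvecs k" using assms by (auto simp: kvecs_def x_def)
  show "\<forall>i j. i<j \<and> j<h \<longrightarrow> x i + x j \<noteq> 0"
    using assms by (auto simp: x_def add.commute)
  have "linform k a x = (\<Sum>t<h. a t * x t)"
    unfolding linform_def
    by (rule sum.mono_neutral_right) (use assms in \<open>auto simp: x_def\<close>)
  also have "\<dots> = (\<Sum>t<h. a t + ((if t = u then a u*(s-1) else 0) + (if t = v then a v*(r-1) else 0)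
       + (if t = w then a w*(c-1) else 0)))"
    by (rule sum.cong) (use assms in \<open>auto simp: x_def algebra_simps\<close>)
  also have "\<dots> = (\<Sum>t<h. a t) + a u*(s-1) + a v*(r-1) + a w*(c-1)"
    unfolding sum.distrib using assms by (simp add: sum.delta)
  finally show "linform k a x = (\<Sum>t<h. a t) + a u*(s-1) + a v*(r-1) + a w*(c-1)" .
qed

lemma main_char:
  fixes a :: "nat \<Rightarrow> 'a::{field,finite}"
  assumes two: "(1::'a) + 1 \<noteq> 0" and big: "card (UNIV::'a set) > 5"
    and h3: "3 \<le> h" and hk: "h \<le> k" and ak: "a \<in> kvecs k" and anz: "a \<noteq> (\<lambda>_. 0)"
    and good: "\<forall>x\<in>kvecs k. linform k a x = 0 \<longrightarrow> (\<exists>i j. i<j \<and> j<h \<and> x i + x j = 0)"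
  shows "\<exists>i j lam. i<j \<and> j<h \<and> lam\<noteq>0 \<and> a = (\<lambda>t. if t=i \<or> t=j then lam else 0)"
proof -
  have nobad: "linform k a x \<noteq> 0" if "x \<in> kvecs k" "\<forall>i j. i<j \<and> j<h \<longrightarrow> x i + x j \<noteq> 0" for x
    using good that by blast
  define S where "S = (\<Sum>t<h. a t)"
  have step1: "a t = 0" if "h \<le> t" for t
  proof (rule ccontr)
    assume at: "a t \<noteq> 0"
    have tk: "t < k" using at ak by (auto simp: kvecs_def not_less[symmetric])
    define y where "y = - S / a t"
    define x0 where "x0 = (\<lambda>i::nat. if i < h then (1::'a) else 0)"
    have l0: "linform k a x0 = S"
      unfolding linform_def S_def x0_def
      by (rule sum.mono_neutral_cong_right) (use hk in auto)
    have "linform k a (x0(t:=y)) = 0"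
      using l0 tk that at by (simp add: linform_upd y_def x0_def)
    moreover have "x0(t:=y) \<in> kvecs k" using tk hk by (auto simp: kvecs_def x0_def)
    moreover have "\<forall>i j. i<j \<and> j<h \<longrightarrow> (x0(t:=y)) i + (x0(t:=y)) j \<noteq> 0"
      using that two by (auto simp: x0_def)
    ultimately show False using nobad by blast
  qed
  have other: "\<exists>w<h. w\<noteq>u \<and> w\<noteq>v" for u v :: nat
  proof -
    have "\<exists>w<3. w\<noteq>u \<and> w\<noteq>v" by presburger
    thus ?thesis using h3 by (meson less_le_trans)
  qed
  have step2: "a u = a v" if "u<h" "v<h" "u\<noteq>v" "a u \<noteq> 0" "a v \<noteq> 0" for u v
  proof (rule ccontr)
    assume ne: "a u \<noteq> a v"
    obtain w where w: "w<h" "w\<noteq>u" "w\<noteq>v" using other by blast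
    define K where "K = S - a u - a v"
    obtain r where r: "r \<noteq> -1" "r \<noteq> (a u - K)/a v" "r \<noteq> K/(a u - a v)"
      using avoid4[OF big] by blast
    define s where "s = -(K + a v * r)/a u"
    have s1: "s + 1 \<noteq> 0"
    proof
      assume "s + 1 = 0"
      hence "K + a v * r = a u" using that by (simp add: s_def field_simps)
      hence "r = (a u - K)/a v" using that by (simp add: field_simps)
      thus False using r by simp
    qed
    have sr: "s + r \<noteq> 0"
    proof
      assume "s + r = 0"
      hence "K = (a u - a v) * r" using that by (simp add: s_def field_simps)
      hence "r = K/(a u - a v)" using ne by (simp add: field_simps)
      thus False using r by simp
    qed
    have r1: "r + 1 \<noteq> 0" using r(1) by (simp add: eq_neg_iff_add_eq_0)
    have s1': "s + 1 \<noteq> 0" "r + 1 \<noteq> 0" using s1 r1 by auto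
    note c = construct3[OF two that(1,2) w(1) that(3) w(2)[symmetric] w(3)[symmetric] hk s1 r1 two sr s1 r1]
    have "linform k a (\<lambda>t. if t = u then s else if t = v then r else if t = w then 1 else if t < h then 1 else 0) = 0"
    proof -
      have e1: "a u * s = -(K + a v * r)" using that(4) by (simp add: s_def)
      have "(\<Sum>t<h. a t) + a u*(s-1) + a v*(r-1) + a w*(1-1) = K + a u * s + a v * r"
        by (simp add: K_def S_def algebra_simps)
      also have "\<dots> = 0" using e1 by simp
      finally show ?thesis using c(3) by simp
    qed
    thus False using c(1,2) nobad by blast
  qed
  obtain u0 where u0: "a u0 \<noteq> 0" using anz by auto
  have u0h: "u0 < h" using step1 u0 not_less by blast
  define al where "al = a u0"
  have aeq: "a t = al" if "t < h" "a t \<noteq> 0" for t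
    using step2[of t u0] that u0 u0h by (cases "t = u0") (auto simp: al_def)
  show ?thesis
  proof (cases "\<exists>v w. v<h \<and> w<h \<and> v \<noteq> u0 \<and> w \<noteq> u0 \<and> v \<noteq> w \<and> a v \<noteq> 0 \<and> a w \<noteq> 0")
    case True
    then obtain v w where vw: "v<h" "w<h" "u0 \<noteq> v" "u0 \<noteq> w" "v \<noteq> w" "a v \<noteq> 0" "a w \<noteq> 0" by blast
    have av: "a v = al" "a w = al" using aeq vw by auto
    have alnz: "al \<noteq> 0" using u0 al_def by simp
    define M where "M = -(S - 3*al)/al"
    obtain c where c: "c \<noteq> -1" "c \<noteq> M" using avoid4[OF big] by blast
    obtain s where s: "s \<noteq> -1" "s \<noteq> M - c + 1" "s \<noteq> -c" "s \<noteq> M" using avoid4[OF big] by blast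
    define r where "r = M - c - s"
    have h1: "s + 1 \<noteq> 0" "r + 1 \<noteq> 0" "c + 1 \<noteq> 0" "s + r \<noteq> 0" "s + c \<noteq> 0" "r + c \<noteq> 0"
    proof -
      show "s + 1 \<noteq> 0" using s(1) by (simp add: eq_neg_iff_add_eq_0)
      show "c + 1 \<noteq> 0" using c(1) by (simp add: eq_neg_iff_add_eq_0)
      show "r + 1 \<noteq> 0" using s(2) by (auto simp: r_def algebra_simps)
      show "s + r \<noteq> 0" using c(2) by (auto simp: r_def algebra_simps)
      show "s + c \<noteq> 0" using s(3) by (simp add: eq_neg_iff_add_eq_0)
      show "r + c \<noteq> 0" using s(4) by (auto simp: r_def algebra_simps)
    qed
    note cc = construct3[OF two u0h vw(1,2,3,4,5) hk h1]
    have "(\<Sum>t<h. a t) + a u0*(s-1) + a v*(r-1) + a w*(c-1) = (S - 3*al) + al * M"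
      by (simp add: S_def av al_def[symmetric] r_def algebra_simps)
    also have "\<dots> = 0" using alnz by (simp add: M_def)
    finally have "linform k a (\<lambda>t. if t = u0 then s else if t = v then r else if t = w then c else if t < h then 1 else 0) = 0"
      using cc(3) by simp
    thus ?thesis using cc(1,2) nobad by blast
  next
    case False
    show ?thesis
    proof (cases "\<exists>v<h. v \<noteq> u0 \<and> a v \<noteq> 0")
      case True
      then obtain v where v: "v<h" "v \<noteq> u0" "a v \<noteq> 0" by blast
      have aform: "a = (\<lambda>t. if t=u0 \<or> t=v then al else 0)"
      proof
        fix t show "a t = (if t=u0 \<or> t=v then al else 0)"
        proof (cases "t < h")
          case True
          then show ?thesis using False v aeq u0h al_def by metis
        next
          case False
          then show ?thesis using step1 v u0h by auto
        qed
      qed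
      have alnz: "al \<noteq> 0" using u0 al_def by simp
      show ?thesis
      proof (cases "u0 < v")
        case True
        thus ?thesis using aform alnz v by blast
      next
        case False
        hence "v < u0" using v by simp
        moreover have "a = (\<lambda>t. if t=v \<or> t=u0 then al else 0)" using aform by auto
        ultimately show ?thesis using alnz u0h by blast
      qed
    next
      case False
      hence only: "a t = 0" if "t < h" "t \<noteq> u0" for t using that by blast
      obtain v w where vw: "v<h" "w<h" "u0 \<noteq> v" "u0 \<noteq> w" "v \<noteq> w"
      proof -
        have "\<exists>v w. v<3 \<and> w<3 \<and> u0 \<noteq> v \<and> u0 \<noteq> w \<and> v \<noteq> w" by presburger
        thus ?thesis using that h3 by (meson less_le_trans)
      qed
      have h1: "(0::'a) + 1 \<noteq> 0" "(1::'a) + 1 \<noteq> 0" "(1::'a) + 1 \<noteq> 0" "(0::'a) + 1 \<noteq> 0" "(0::'a) + 1 \<noteq> 0" "(1::'a) + 1 \<noteq> 0"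
        using two by auto
      note cc = construct3[OF two u0h vw(1,2,3,4,5) hk h1]
      have S: "S = al"
      proof -
        have "S = (\<Sum>t<h. if t = u0 then al else 0)"
          unfolding S_def by (rule sum.cong) (auto simp: only al_def)
        thus ?thesis using u0h by simp
      qed
      have "(\<Sum>t<h. a t) + a u0*(0-1) + a v*(1-1) + a w*(1-1) = 0"
        using S by (simp add: S_def al_def)
      hence "linform k a (\<lambda>t. if t = u0 then 0 else if t = v then 1 else if t = w then 1 else if t < h then 1 else 0) = 0"
        using cc(3) by simp
      thus ?thesis using cc(1,2) nobad by blast
    qed
  qed
qed

lemma linform_pair:
  assumes "i \<noteq> j" "i < k" "j < k"
  shows "linform k (\<lambda>t. if t=i \<or> t=j then lam else 0) x = lam * (x i + x j)"
proof -
  have "linform k (\<lambda>t. if t=i \<or> t=j then lam else 0) x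
      = (\<Sum>t<k. (if t = i then lam * x i else 0) + (if t = j then lam * x j else 0))"
    unfolding linform_def by (rule sum.cong) (use assms in auto)
  also have "\<dots> = lam * (x i + x j)" unfolding sum.distrib using assms by (simp add: algebra_simps)
  finally show ?thesis .
qed

theorem proposition3p2:
  fixes p m h k :: nat and D2 :: "(nat \<Rightarrow> 'a::{field,finite}) set"
  assumes "prime p" and "odd p" and "card (UNIV :: 'a set) = p ^ m" and "card (UNIV :: 'a set) > 5"
    and "3 \<le> h" and "h \<le> k"
    and D2_def: "D2 = {x \<in> kvecs k. x \<noteq> (\<lambda>_. 0) \<and>
                   (\<Prod>(i, j)\<in>{(i, j). i < j \<and> j < h}. x i + x j) = 0}"
  shows "int (Min (hwt D2 ` (code k D2 - {zero_word D2})))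
           = int (card D2) - int (card (UNIV :: 'a set)) ^ (k - 1) + 1
         \<and> (\<forall>c \<in> code k D2 - {zero_word D2}.
           int (hwt D2 c) = int (card D2) - int (card (UNIV :: 'a set)) ^ (k - 1) + 1
           \<longleftrightarrow> (\<exists>i j (lam::'a). i < j \<and> j < h \<and> lam \<noteq> 0 \<and>
                 c = codeword k D2 (\<lambda>t. if t = i \<or> t = j then lam else 0)))"
proof -
  have two: "(1::'a) + 1 \<noteq> 0" using two_ne0 assms(2,3) by blast
  define q where "q = card (UNIV :: 'a set)"
  define Pairs where "Pairs = {(i, j). i < j \<and> j < h}"
  have finP: "finite Pairs"
    by (rule finite_subset[of _ "{..<h} \<times> {..<h}"]) (auto simp: Pairs_def)
  define Z where "Z = {x \<in> kvecs k. \<exists>i j. i < j \<and> j < h \<and> x i + x j = (0::'a)}"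
  have prod0: "(\<Prod>(i, j)\<in>Pairs. x i + x j) = 0 \<longleftrightarrow> (\<exists>i j. i < j \<and> j < h \<and> x i + x j = (0::'a))" for x
    using finP by (auto simp: prod_zero_iff Pairs_def)
  have D2Z: "D2 = Z - {\<lambda>_. 0}" unfolding D2_def Z_def using prod0 by (auto simp: Pairs_def)
  have finZ: "finite Z" using finite_kvecs by (rule finite_subset[rotated]) (auto simp: Z_def)
  have finD: "finite D2" using finZ D2Z by simp
  have zZ: "(\<lambda>_. 0) \<in> Z"
  proof -
    have "(0::nat) < 1 \<and> (1::nat) < h \<and> (0::'a) + 0 = 0" using assms(5) by simp
    thus ?thesis unfolding Z_def kvecs_def by blast
  qed
  define Kr where "Kr a = {x \<in> kvecs k. linform k a x = 0}" for a :: "nat \<Rightarrow> 'a"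
  have zK: "(\<lambda>_. 0) \<in> Kr a" for a by (simp add: Kr_def kvecs_def linform_def)
  have wt: "int (hwt D2 (codeword k D2 a)) = int (card D2) - int (card (Z \<inter> Kr a)) + 1" for a
  proof -
    have h1: "hwt D2 (codeword k D2 a) = card {P\<in>D2. linform k a P \<noteq> 0}"
      unfolding hwt_def codeword_def by (rule arg_cong[where f=card]) auto
    have h2: "{P\<in>D2. linform k a P = 0} = (Z \<inter> Kr a) - {\<lambda>_. 0}"
      unfolding D2Z Kr_def Z_def by auto
    have h3: "card {P\<in>D2. linform k a P = 0} = card (Z \<inter> Kr a) - 1"
      unfolding h2 using zZ zK finZ by (simp add: card_Diff_singleton)
    have h4: "card (Z \<inter> Kr a) \<ge> 1" using zZ zK finZ
      by (metis IntI card_0_eq empty_iff finite_Int less_one not_le)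
    have "D2 = {P\<in>D2. linform k a P \<noteq> 0} \<union> {P\<in>D2. linform k a P = 0}" by auto
    hence "card D2 = card {P\<in>D2. linform k a P \<noteq> 0} + card {P\<in>D2. linform k a P = 0}"
      using finD by (metis (no_types, lifting) card_Un_disjoint disjoint_iff finite_Un mem_Collect_eq)
    thus ?thesis using h1 h3 h4 by simp
  qed
  have kerc: "card (Kr a) = q ^ (k - 1)" if ah: "a \<in> kvecs k" "a \<noteq> (\<lambda>_. 0)" for a
  proof -
    obtain t where t: "a t \<noteq> 0" using ah(2) by (auto simp: fun_eq_iff)
    have "t < k" using t ah(1) by (auto simp: kvecs_def not_less[symmetric])
    thus ?thesis unfolding Kr_def q_def using ker_card t by blast
  qed
  have finK: "finite (Kr a)" for a using finite_kvecs by (rule finite_subset[rotated]) (auto simp: Kr_def)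
  have lower: "int (hwt D2 (codeword k D2 a)) \<ge> int (card D2) - int q ^ (k - 1) + 1"
    if "a \<in> kvecs k" "a \<noteq> (\<lambda>_. 0)" for a
  proof -
    have "card (Z \<inter> Kr a) \<le> card (Kr a)" using finK by (intro card_mono) auto
    hence "int (card (Z \<inter> Kr a)) \<le> int q ^ (k-1)" using kerc[OF that] by simp
    thus ?thesis using wt[of a] by simp
  qed
  have eqiff: "int (hwt D2 (codeword k D2 a)) = int (card D2) - int q ^ (k - 1) + 1 \<longleftrightarrow> Kr a \<subseteq> Z"
    if "a \<in> kvecs k" "a \<noteq> (\<lambda>_. 0)" for a
  proof -
    have "int (hwt D2 (codeword k D2 a)) = int (card D2) - int q ^ (k - 1) + 1
        \<longleftrightarrow> card (Z \<inter> Kr a) = card (Kr a)"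
      using wt[of a] kerc[OF that] by auto
    also have "\<dots> \<longleftrightarrow> Z \<inter> Kr a = Kr a"
      using finK by (metis card_subset_eq inf_le2)
    also have "\<dots> \<longleftrightarrow> Kr a \<subseteq> Z" by auto
    finally show ?thesis .
  qed
  define b where "b i j lam = (\<lambda>t::nat. if t = i \<or> t = j then lam else (0::'a))" for i j lam
  have bprops: "b i j lam \<in> kvecs k" "b i j lam \<noteq> (\<lambda>_. 0)" "Kr (b i j lam) \<subseteq> Z"
    if "i < j" "j < h" "lam \<noteq> 0" for i j lam
  proof -
    show "b i j lam \<in> kvecs k" using that assms(6) by (auto simp: b_def kvecs_def)
    show "b i j lam \<noteq> (\<lambda>_. 0)" using that by (auto simp: b_def fun_eq_iff)
    show "Kr (b i j lam) \<subseteq> Z"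
    proof
      fix x assume "x \<in> Kr (b i j lam)"
      hence "x \<in> kvecs k" "lam * (x i + x j) = 0"
        using linform_pair[of i j k lam x] that assms(6) by (auto simp: Kr_def b_def)
      thus "x \<in> Z" using that by (auto simp: Z_def)
    qed
  qed
  have codeE: "\<exists>a. a \<in> kvecs k \<and> a \<noteq> (\<lambda>_. 0) \<and> c = codeword k D2 a"
    if ch: "c \<in> code k D2 - {zero_word D2}" for c
  proof -
    obtain a where a: "a \<in> kvecs k" "c = codeword k D2 a" using ch by (auto simp: code_def)
    have "a \<noteq> (\<lambda>_. 0)"
    proof
      assume "a = (\<lambda>_. 0)"
      moreover have "linform k (\<lambda>_. 0) = (\<lambda>_. (0::'a))" by (simp add: fun_eq_iff linform_def)
      ultimately have "c = zero_word D2" using a by (simp add: codeword_def zero_word_def)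
      thus False using ch by simp
    qed
    thus ?thesis using a by blast
  qed
  have iffpart: "\<forall>c \<in> code k D2 - {zero_word D2}.
           int (hwt D2 c) = int (card D2) - int (card (UNIV :: 'a set)) ^ (k - 1) + 1
           \<longleftrightarrow> (\<exists>i j (lam::'a). i < j \<and> j < h \<and> lam \<noteq> 0 \<and>
                 c = codeword k D2 (\<lambda>t. if t = i \<or> t = j then lam else 0))"
  proof
    fix c assume c: "c \<in> code k D2 - {zero_word D2}"
    obtain a where a: "a \<in> kvecs k" "a \<noteq> (\<lambda>_. 0)" "c = codeword k D2 a" using codeE[OF c] by blast
    show "int (hwt D2 c) = int (card D2) - int (card (UNIV :: 'a set)) ^ (k - 1) + 1
           \<longleftrightarrow> (\<exists>i j (lam::'a). i < j \<and> j < h \<and> lam \<noteq> 0 \<and>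
                 c = codeword k D2 (\<lambda>t. if t = i \<or> t = j then lam else 0))"
    proof
      assume "int (hwt D2 c) = int (card D2) - int (card (UNIV :: 'a set)) ^ (k - 1) + 1"
      hence "Kr a \<subseteq> Z" using eqiff[OF a(1,2)] a(3) by (simp add: q_def)
      hence "\<forall>x\<in>kvecs k. linform k a x = 0 \<longrightarrow> (\<exists>i j. i<j \<and> j<h \<and> x i + x j = 0)"
        by (auto simp: Kr_def Z_def)
      then obtain i j lam where "i<j" "j<h" "lam\<noteq>0" "a = (\<lambda>t. if t=i \<or> t=j then lam else 0)"
        using main_char[OF two assms(4,5,6) a(1,2)] by blast
      thus "\<exists>i j (lam::'a). i < j \<and> j < h \<and> lam \<noteq> 0 \<and>
                 c = codeword k D2 (\<lambda>t. if t = i \<or> t = j then lam else 0)" using a(3) by blast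
    next
      assume "\<exists>i j (lam::'a). i < j \<and> j < h \<and> lam \<noteq> 0 \<and>
                 c = codeword k D2 (\<lambda>t. if t = i \<or> t = j then lam else 0)"
      then obtain i j lam where ij: "i < j" "j < h" "lam \<noteq> 0" "c = codeword k D2 (b i j lam)"
        by (auto simp: b_def)
      show "int (hwt D2 c) = int (card D2) - int (card (UNIV :: 'a set)) ^ (k - 1) + 1"
        using eqiff[OF bprops(1,2)[OF ij(1-3)]] bprops(3)[OF ij(1-3)] ij(4) by (simp add: q_def)
    qed
  qed
  define c0 where "c0 = codeword k D2 (b 0 1 1)"
  have e0: "(\<lambda>t. if t = 0 then (1::'a) else 0) \<in> D2"
  proof -
    let ?e = "\<lambda>t::nat. if t = 0 then (1::'a) else 0"
    have "?e \<in> kvecs k" using assms(5,6) by (auto simp: kvecs_def)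
    moreover have "(1::nat) < 2 \<and> (2::nat) < h \<and> ?e 1 + ?e 2 = 0" using assms(5) by simp
    moreover have "?e \<noteq> (\<lambda>_. 0)" by (auto simp: fun_eq_iff)
    ultimately show ?thesis unfolding D2Z Z_def by blast
  qed
  have c0in: "c0 \<in> code k D2 - {zero_word D2}"
  proof
    show "c0 \<in> code k D2" unfolding c0_def code_def using bprops(1)[of 0 1 1] assms(5) by auto
    have "linform k (b 0 1 1) (\<lambda>t. if t = 0 then (1::'a) else 0) = 1"
      using linform_pair[of 0 1 k 1 "\<lambda>t::nat. if t = 0 then (1::'a) else 0"] assms(5,6) by (simp add: b_def)
    hence "c0 (\<lambda>t. if t = 0 then (1::'a) else 0) \<noteq> zero_word D2 (\<lambda>t. if t = 0 then (1::'a) else 0)"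
      using e0 by (simp add: c0_def codeword_def zero_word_def)
    thus "c0 \<notin> {zero_word D2}" by auto
  qed
  have c0w: "int (hwt D2 c0) = int (card D2) - int (card (UNIV :: 'a set)) ^ (k - 1) + 1"
    using eqiff[OF bprops(1,2)[of 0 1 1]] bprops(3)[of 0 1 1] assms(5) by (simp add: c0_def q_def)
  have allge: "int (hwt D2 c) \<ge> int (card D2) - int (card (UNIV :: 'a set)) ^ (k - 1) + 1"
    if "c \<in> code k D2 - {zero_word D2}" for c
    using codeE[OF that] lower by (auto simp: q_def)
  have finH: "finite (hwt D2 ` (code k D2 - {zero_word D2}))"
  proof (rule finite_subset[of _ "{..card D2}"])
    show "hwt D2 ` (code k D2 - {zero_word D2}) \<subseteq> {..card D2}"
      unfolding hwt_def using finD by (auto intro: card_mono)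
  qed simp
  have "Min (hwt D2 ` (code k D2 - {zero_word D2})) = hwt D2 c0"
  proof (rule Min_eqI[OF finH])
    fix y assume "y \<in> hwt D2 ` (code k D2 - {zero_word D2})"
    then obtain c where c: "c \<in> code k D2 - {zero_word D2}" "y = hwt D2 c" by blast
    have "int (hwt D2 c0) \<le> int (hwt D2 c)" using allge[OF c(1)] c0w by linarith
    thus "hwt D2 c0 \<le> y" using c(2) by simp
  qed (use c0in in auto)
  thus ?thesis using c0w iffpart by simp
qed

end
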